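(* Let $x_1,x_2,x_3,x_4\in\mathbb{Z}^3$ be the vertices of a Fano tetrahedron, and let $\lambda_1\le\lambda_2\le\lambda_3\le\lambda_4$ be non-negative integers with $\gcd(\lambda_1,\ldots,\lambda_4)=1$ and $\sum_i\lambda_ix_i=0$. Then there exist $g\in GL(3,\mathbb{Z})$, integers $a,b$ with $a>0$ and $a\lambda_3+b\lambda_4=1$, and $k,k',k''\in\mathbb{N}$ with $$0\le k''\lambda_4-a\lambda_1<k\lambda_4,\qquad 0\le k'\lambda_4-a\lambda_2<k\lambda_4,$$ such that $gx_1=(1,0,0)$, $gx_2=(0,1,0)$, $gx_3=(k''\lambda_4-a\lambda_1,\ k'\lambda_4-a\lambda_2,\ k\lambda_4)$ and $gx_4=(-k''\lambda_3-b\lambda_1,\ -k'\lambda_3-b\lambda_2,\ -k\lambda_3)$. Moreover, one of the two lower inequalities above can be an equality (i.e. $k''\lambda_4-a\lambda_1=0$ or $k'\lambda_4-a\lambda_2=0$) only if $\lambda_4=1$.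
   Context: A tetrahedron is called Fano if its vertices lie in $\mathbb{Z}^3$ and the only lattice point it contains other than its vertices is the origin, which lies strictly in its interior. *)

theory Defs
  imports "HOL-Analysis.Analysis"
begin

definition rvec :: "int^3 \<Rightarrow> real^3" where
  "rvec x = (\<chi> i. real_of_int (x $ i))"

definition fano_tetrahedron :: "int^3 \<Rightarrow> int^3 \<Rightarrow> int^3 \<Rightarrow> int^3 \<Rightarrow> bool" where
  "fano_tetrahedron x1 x2 x3 x4 \<longleftrightarrow>
     card {x1, x2, x3, x4} = 4 \<and>
     \<not> affine_dependent (rvec ` {x1, x2, x3, x4}) \<and>
     (\<forall>z::int^3. rvec z \<in> convex hull (rvec ` {x1, x2, x3, x4}) \<longleftrightarrow> z \<in> {x1, x2, x3, x4, 0}) \<and>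
     (0::real^3) \<in> interior (convex hull (rvec ` {x1, x2, x3, x4}))"

end

theory Submission
  imports Defs
begin

definition dot3 :: "int^3 \<Rightarrow> int^3 \<Rightarrow> int" where
  "dot3 u v = u$1* v$1 + u$2* v$2 + u$3* v$3"

definition cross3 :: "int^3 \<Rightarrow> int^3 \<Rightarrow> int^3" where
  "cross3 u v = vector [u$2* v$3 - u$3* v$2, u$3* v$1 - u$1* v$3, u$1* v$2 - u$2* v$1]"

lemma cross3_comp[simp]:
  "cross3 u v $ 1 = u$2* v$3 - u$3* v$2"
  "cross3 u v $ 2 = u$3* v$1 - u$1* v$3"
  "cross3 u v $ 3 = u$1* v$2 - u$2* v$1"
  by (simp_all add: cross3_def)

lemma vec3_eq: "(x::'a^3) = y \<longleftrightarrow> x$1 = y$1 \<and> x$2 = y$2 \<and> x$3 = y$3"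
  by (simp add: vec_eq_iff forall_3)

lemma mv3: "(A *v x) $ i = dot3 (A $ i) x"
  by (simp add: matrix_vector_mult_def dot3_def sum_3)

lemma rvec_comp[simp]: "rvec z $ i = real_of_int (z $ i)"
  by (simp add: rvec_def)

lemma rvec_inner: "rvec m \<bullet> rvec y = real_of_int (dot3 m y)"
  by (simp add: inner_vec_def sum_3 dot3_def)

lemma rvec_neq0: "m \<noteq> 0 \<Longrightarrow> rvec m \<noteq> 0"
  by (simp add: vec_eq_iff)

lemma halfspace_False:
  fixes n :: "real^3"
  assumes "0 \<in> interior (convex hull S)" "n \<noteq> 0" "\<And>y. y \<in> S \<Longrightarrow> 0 \<le> n \<bullet> y"
  shows False
proof -
  have sub: "convex hull S \<subseteq> {y. n \<bullet> y \<ge> 0}"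
    by (rule hull_minimal) (use assms(3) convex_halfspace_ge in auto)
  obtain e where e: "e > 0" "ball 0 e \<subseteq> convex hull S"
    using assms(1) mem_interior by blast
  define y where "y = (- (e/2) / norm n) *\<^sub>R n"
  have ny: "norm y = e/2" using e(1) assms(2) by (simp add: y_def)
  have "y \<in> ball 0 e" using ny e(1) by simp
  then have "n \<bullet> y \<ge> 0" using e(2) sub by blast
  moreover have "n \<bullet> y = - (e/2) * norm n"
    using assms(2) by (simp add: y_def power2_norm_eq_inner[symmetric] power2_eq_square)
  moreover have "norm n > 0" using assms(2) by simp
  moreover have "(e/2) * norm n > 0" using e(1) \<open>norm n > 0\<close> by simp
  ultimately show False by linarith
qed

lemma tri:
  assumes "0 \<in> convex hull S" "u \<in> S" "v \<in> S" "0 \<le> a" "0 \<le> b" "a + b \<le> (1::real)"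
  shows "a *\<^sub>R u + b *\<^sub>R v \<in> convex hull S"
proof -
  have "convex hull {0,u,v} \<subseteq> convex hull S"
    by (rule hull_minimal) (auto simp: assms hull_inc convex_convex_hull)
  moreover have "a *\<^sub>R u + b *\<^sub>R v \<in> convex hull {0,u,v}"
  proof -
    have "\<exists>p q r. a *\<^sub>R u + b *\<^sub>R v = p *\<^sub>R 0 + q *\<^sub>R u + r *\<^sub>R v \<and> 0 \<le> p \<and> 0 \<le> q \<and> 0 \<le> r \<and> p + q + r = 1"
      using assms(4-6) by (intro exI[of _ "1-a-b"] exI[of _ a] exI[of _ b]) auto
    then show ?thesis unfolding convex_hull_3 by blast
  qed
  ultimately show ?thesis by blast
qed


lemma dot3_cross_simps:
  "dot3 (cross3 u v) u = 0" "dot3 (cross3 u v) v = 0"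
  "dot3 (cross3 v w) u = dot3 (cross3 u v) w"
  "dot3 (cross3 w u) v = dot3 (cross3 u v) w"
  by (simp_all add: dot3_def algebra_simps)

lemma dot_lin:
  assumes "p *s z = g *s x + d *s y"
  shows "p * dot3 n z = g * dot3 n x + d * dot3 n y"
proof -
  have h: "p * z$i = g * x$i + d * y$i" for i
    using arg_cong[OF assms, of "\<lambda>v. v$i"] by simp
  have "p * dot3 n z = n$1*(p*z$1) + n$2*(p*z$2) + n$3*(p*z$3)"
    by (simp add: dot3_def algebra_simps)
  also have "\<dots> = g * dot3 n x + d * dot3 n y"
    unfolding h by (simp add: dot3_def algebra_simps)
  finally show ?thesis .
qed

lemma key:
  fixes x1 x2 x3 x4 z :: "int^3" and p gm dl :: int
  assumes lat: "\<forall>z. rvec z \<in> convex hull (rvec ` {x1,x2,x3,x4}) \<longleftrightarrow> z \<in> {x1,x2,x3,x4,0}"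
    and h0: "0 \<in> convex hull (rvec ` {x1,x2,x3,x4})"
    and D: "dot3 (cross3 x1 x2) x3 \<noteq> 0"
    and c4: "dot3 (cross3 x1 x2) x4 \<noteq> 0"
    and p: "p > 0" "0 \<le> gm" "0 \<le> dl" "gm + dl \<le> p"
    and eq: "p *s z = gm *s x1 + dl *s x2"
  shows "(gm = 0 \<and> dl = 0) \<or> (gm = p \<and> dl = 0) \<or> (gm = 0 \<and> dl = p)"
proof -
  have h: "real_of_int p * real_of_int (z$i) = real_of_int gm * x1$i + real_of_int dl * x2$i" for i
    using arg_cong[OF eq, of "\<lambda>v. real_of_int (v$i)"] by simp
  have "rvec z = (real_of_int gm / p) *\<^sub>R rvec x1 + (real_of_int dl / p) *\<^sub>R rvec x2"
  proof (subst vec_eq_iff, rule allI)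
    fix i
    show "rvec z $ i = ((real_of_int gm / p) *\<^sub>R rvec x1 + (real_of_int dl / p) *\<^sub>R rvec x2) $ i"
      using h[of i] p(1) by (simp add: field_simps)
  qed
  also have "\<dots> \<in> convex hull (rvec ` {x1,x2,x3,x4})"
    by (rule tri[OF h0]) (use p in \<open>auto simp: field_simps\<close>)
  finally have zin: "z \<in> {x1,x2,x3,x4,0}" using lat by blast
  define D where "D = dot3 (cross3 x1 x2) x3"
  have e1: "p * dot3 (cross3 x2 x3) z = gm * D"
    using dot_lin[OF eq, of "cross3 x2 x3"] by (simp add: dot3_cross_simps D_def)
  have e2: "p * dot3 (cross3 x3 x1) z = dl * D"
    using dot_lin[OF eq, of "cross3 x3 x1"] by (simp add: dot3_cross_simps D_def)
  have e3: "p * dot3 (cross3 x1 x2) z = 0"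
    using dot_lin[OF eq, of "cross3 x1 x2"] by (simp add: dot3_cross_simps)
  have DD: "D \<noteq> 0" using D by (simp add: D_def)
  from zin show ?thesis
  proof (elim insertE emptyE)
    assume "z = x1"
    then show ?thesis using e1 e2 DD by (simp add: dot3_cross_simps D_def)
  next
    assume "z = x2"
    then show ?thesis using e1 e2 DD by (simp add: dot3_cross_simps D_def)
  next
    assume "z = x3"
    then show ?thesis using e1 e2 DD by (simp add: dot3_cross_simps D_def)
  next
    assume "z = x4"
    then show ?thesis using e3 c4 p(1) by simp
  next
    assume "z = 0"
    then show ?thesis using e1 e2 DD by (simp add: dot3_def)
  qed
qed


lemma gcd_c:
  fixes x1 x2 x3 x4 :: "int^3"
  assumes lat: "\<forall>z. rvec z \<in> convex hull (rvec ` {x1,x2,x3,x4}) \<longleftrightarrow> z \<in> {x1,x2,x3,x4,0}"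
    and h0: "0 \<in> convex hull (rvec ` {x1,x2,x3,x4})"
    and D: "dot3 (cross3 x1 x2) x3 \<noteq> 0"
    and c4: "dot3 (cross3 x1 x2) x4 \<noteq> 0"
  shows "gcd (cross3 x1 x2 $ 1) (gcd (cross3 x1 x2 $ 2) (cross3 x1 x2 $ 3)) = 1"
proof (rule ccontr)
  define c where "c = cross3 x1 x2"
  define p where "p = gcd (c $ 1) (gcd (c $ 2) (c $ 3))"
  assume "gcd (cross3 x1 x2 $ 1) (gcd (cross3 x1 x2 $ 2) (cross3 x1 x2 $ 3)) \<noteq> 1"
  then have pn1: "p \<noteq> 1" by (simp add: p_def c_def)
  have pn0: "p \<noteq> 0"
  proof
    assume "p = 0"
    then have "c $ 1 = 0" "c $ 2 = 0" "c $ 3 = 0" by (auto simp: p_def)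
    then show False using D by (simp add: c_def[symmetric] dot3_def)
  qed
  have p1: "p > 1" using pn1 pn0 by (smt (verit) gcd_ge_0_int p_def)
  have pc: "p dvd c$1" "p dvd c$2" "p dvd c$3" unfolding p_def by (meson dvd_trans gcd_dvd1 gcd_dvd2)+
  obtain al be where ab: "\<not> (p dvd al \<and> p dvd be)" "\<And>j. p dvd (al * x1$j + be * x2$j)"
  proof (cases "\<forall>j. p dvd x1$j")
    case True
    show ?thesis
      by (rule that[of 1 0]) (use True p1 in \<open>auto simp: zdvd_not_zless\<close>)
  next
    case False
    then obtain i where i: "\<not> p dvd x1$i" by blast
    show ?thesis
    proof (rule that[of "x2$i" "- x1$i"])
      show "\<not> (p dvd x2$i \<and> p dvd - x1$i)" using i by simp
      fix j
      show "p dvd (x2$i * x1$j + - x1$i * x2$j)"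
      proof -
        have m: "p dvd (x1$2 * x2$3 - x1$3 * x2$2)" "p dvd (x1$3 * x2$1 - x1$1 * x2$3)"
          "p dvd (x1$1 * x2$2 - x1$2 * x2$1)" using pc by (simp_all add: c_def)
        have m2: "p dvd (x2$3 * x1$2 - x2$2 * x1$3)" "p dvd (x2$1 * x1$3 - x2$3 * x1$1)"
          "p dvd (x2$2 * x1$1 - x2$1 * x1$2)" using m by (simp_all add: mult.commute)
        have m3: "p dvd (x2$2 * x1$3 - x2$3 * x1$2)" "p dvd (x2$3 * x1$1 - x2$1 * x1$3)"
          "p dvd (x2$1 * x1$2 - x2$2 * x1$1)" using m2 by (simp_all add: dvd_diff_commute)
        have "x2$i * x1$j + - x1$i * x2$j = x2$i * x1$j - x2$j * x1$i" by (simp add: mult.commute)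
        moreover have "p dvd (x2$i * x1$j - x2$j * x1$i)"
          using exhaust_3[of i] exhaust_3[of j] m2 m3 by auto
        ultimately show ?thesis by (simp add: mult.commute)
      qed
    qed
  qed
  define a' where "a' = al mod p"
  define b' where "b' = be mod p"
  have a'b: "0 \<le> a'" "a' < p" "0 \<le> b'" "b' < p" using p1 by (simp_all add: a'_def b'_def)
  have nz: "\<not> (a' = 0 \<and> b' = 0)" using ab(1) by (auto simp: a'_def b'_def dvd_eq_mod_eq_0)
  have dv: "p dvd (a' * x1$j + b' * x2$j)" for j
  proof -
    have "a' * x1$j + b' * x2$j = (al * x1$j + be * x2$j) - p * ((al div p) * x1$j + (be div p) * x2$j)"
      unfolding a'_def b'_def by (simp add: algebra_simps minus_div_mult_eq_mod[symmetric])
    then show ?thesis using ab(2)[of j] by simp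
  qed
  define z where "z = (\<chi> j. (a' * x1$j + b' * x2$j) div p)"
  have zeq: "p *s z = a' *s x1 + b' *s x2"
    by (simp add: vec_eq_iff z_def dv)
  show False
  proof (cases "a' + b' \<le> p")
    case True
    from key[OF lat h0 D c4 _ _ _ True zeq] a'b nz p1 show False by auto
  next
    case False
    have z2: "p *s (x1 + x2 - z) = (p - a') *s x1 + (p - b') *s x2"
      using zeq by (simp add: vec_eq_iff algebra_simps)
    from key[OF lat h0 D c4 _ _ _ _ z2] a'b False p1 show False by auto
  qed
qed


lemma dot3_add_smult[simp]:
  "dot3 (a + b) x = dot3 a x + dot3 b x" "dot3 (k *s a) x = k * dot3 a x"
  "dot3 a (x + y) = dot3 a x + dot3 a y" "dot3 a (k *s x) = k * dot3 a x"
  "dot3 a (x - y) = dot3 a x - dot3 a y"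
  by (simp_all add: dot3_def algebra_simps)

lemma adj_id:
  "x$i * (cross3 y w)$j + y$i * (cross3 w x)$j + w$i * (cross3 x y)$j =
     (if i = j then dot3 (cross3 x y) w else 0)"
  using exhaust_3[of i] exhaust_3[of j] by (auto simp: dot3_def algebra_simps)

lemma mm_t: fixes A B :: "int^3^3" shows "(A ** transpose B) $ i $ j = dot3 (A$i) (B$j)"
  by (simp add: matrix_matrix_mult_def transpose_def sum_3 dot3_def)

lemma t_mm: fixes A B :: "int^3^3" shows "(transpose B ** A) $ i $ j = B$1$i * A$1$j + B$2$i * A$2$j + B$3$i * A$3$j"
  by (simp add: matrix_matrix_mult_def transpose_def sum_3)

lemma mat1_3: "(mat 1 :: int^3^3) $ i $ j = (if i = j then 1 else 0)"
  by (simp add: mat_def)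

lemma real_rel:
  fixes n :: "real^3"
  assumes "\<And>j. l1 * x1$j + l2 * x2$j + l3 * x3$j + l4 * x4$j = (0::int)"
  shows "l1 * (n \<bullet> rvec x1) + l2 * (n \<bullet> rvec x2) + l3 * (n \<bullet> rvec x3) + l4 * (n \<bullet> rvec x4) = 0"
proof -
  have r: "real_of_int l1 * x1$j + real_of_int l2 * x2$j + real_of_int l3 * x3$j + real_of_int l4 * x4$j = 0" for j
    using arg_cong[OF assms[of j], of real_of_int] by simp
  have "l1 * (n \<bullet> rvec x1) + l2 * (n \<bullet> rvec x2) + l3 * (n \<bullet> rvec x3) + l4 * (n \<bullet> rvec x4) =
    n$1 * (real_of_int l1 * x1$1 + real_of_int l2 * x2$1 + real_of_int l3 * x3$1 + real_of_int l4 * x4$1) +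
    n$2 * (real_of_int l1 * x1$2 + real_of_int l2 * x2$2 + real_of_int l3 * x3$2 + real_of_int l4 * x4$2) +
    n$3 * (real_of_int l1 * x1$3 + real_of_int l2 * x2$3 + real_of_int l3 * x3$3 + real_of_int l4 * x4$3)"
    by (simp add: inner_vec_def sum_3 algebra_simps)
  then show ?thesis using r by simp
qed


theorem proposition3p1:
  fixes x1 x2 x3 x4 :: "int^3" and l1 l2 l3 l4 :: int
  assumes "fano_tetrahedron x1 x2 x3 x4"
    and "0 \<le> l1" and "l1 \<le> l2" and "l2 \<le> l3" and "l3 \<le> l4"
    and "gcd l1 (gcd l2 (gcd l3 l4)) = 1"
    and "l1 *s x1 + l2 *s x2 + l3 *s x3 + l4 *s x4 = 0"
  shows "\<exists>(g::int^3^3) (a::int) (b::int) (k::nat) (k'::nat) (k''::nat).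
           invertible g \<and> a > 0 \<and> a * l3 + b * l4 = 1 \<and>
           0 \<le> int k'' * l4 - a * l1 \<and> int k'' * l4 - a * l1 < int k * l4 \<and>
           0 \<le> int k' * l4 - a * l2 \<and> int k' * l4 - a * l2 < int k * l4 \<and>
           g *v x1 = vector [1, 0, 0] \<and>
           g *v x2 = vector [0, 1, 0] \<and>
           g *v x3 = vector [int k'' * l4 - a * l1, int k' * l4 - a * l2, int k * l4] \<and>
           g *v x4 = vector [- int k'' * l3 - b * l1, - int k' * l3 - b * l2, - int k * l3] \<and>
           ((int k'' * l4 - a * l1 = 0 \<or> int k' * l4 - a * l2 = 0) \<longrightarrow> l4 = 1)"
proof -
  let ?S = "rvec ` {x1,x2,x3,x4}"
  have lat: "\<forall>z. rvec z \<in> convex hull ?S \<longleftrightarrow> z \<in> {x1,x2,x3,x4,0}"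
    and int0: "0 \<in> interior (convex hull ?S)"
    using assms(1) unfolding fano_tetrahedron_def by blast+
  have h0: "0 \<in> convex hull ?S" using int0 interior_subset by blast
  have rel: "l1 * x1$j + l2 * x2$j + l3 * x3$j + l4 * x4$j = 0" for j
    using arg_cong[OF assms(7), of "\<lambda>v. v$j"] by simp
  have rel_dot: "l1 * dot3 n x1 + l2 * dot3 n x2 + l3 * dot3 n x3 + l4 * dot3 n x4 = 0" for n
  proof -
    have "l1 * dot3 n x1 + l2 * dot3 n x2 + l3 * dot3 n x3 + l4 * dot3 n x4 =
      n$1 * (l1 * x1$1 + l2 * x2$1 + l3 * x3$1 + l4 * x4$1) +
      n$2 * (l1 * x1$2 + l2 * x2$2 + l3 * x3$2 + l4 * x4$2) +
      n$3 * (l1 * x1$3 + l2 * x2$3 + l3 * x3$3 + l4 * x4$3)"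
      by (simp add: dot3_def algebra_simps)
    then show ?thesis using rel by simp
  qed
  have l4pos: "l4 > 0"
  proof (rule ccontr)
    assume "\<not> l4 > 0"
    then have "l1 = 0" "l2 = 0" "l3 = 0" "l4 = 0" using assms(2-5) by linarith+
    then show False using assms(6) by simp
  qed
  have halfZ: False if m0: "m \<noteq> 0" and mx: "0 \<le> dot3 m x1" "0 \<le> dot3 m x2" "0 \<le> dot3 m x3" "0 \<le> dot3 m x4" for m
  proof (rule halfspace_False[OF int0 rvec_neq0[OF m0]])
    fix y assume "y \<in> ?S"
    then show "0 \<le> rvec m \<bullet> y" using mx by (auto simp: rvec_inner)
  qed
  define c where "c = cross3 x1 x2"
  define D where "D = dot3 c x3"
  have Dnz: "D \<noteq> 0"
  proof
    assume D0: "D = 0"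
    define A :: "real^3^3" where "A = vector [rvec x1, rvec x2, rvec x3]"
    have "det A = real_of_int D"
      by (simp add: A_def det_3 D_def c_def dot3_def algebra_simps)
    then have "\<not> invertible A" using D0 by (simp add: invertible_det_nz)
    then have "\<not> (\<forall>x. A *v x = 0 \<longrightarrow> x = 0)"
      using invertible_left_inverse matrix_left_invertible_ker by blast
    then obtain n where n: "A *v n = 0" "n \<noteq> 0" by blast
    have nx: "n \<bullet> rvec x1 = 0" "n \<bullet> rvec x2 = 0" "n \<bullet> rvec x3 = 0"
      using arg_cong[OF n(1), of "\<lambda>v. v$1"] arg_cong[OF n(1), of "\<lambda>v. v$2"] arg_cong[OF n(1), of "\<lambda>v. v$3"]
      by (simp_all add: A_def matrix_vector_mult_def sum_3 inner_vec_def algebra_simps)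
    have "l4 * (n \<bullet> rvec x4) = 0" using real_rel[OF rel, of n] nx by simp
    then have nx4: "n \<bullet> rvec x4 = 0" using l4pos by simp
    show False
    proof (rule halfspace_False[OF int0 n(2)])
      fix y assume "y \<in> ?S"
      then show "0 \<le> n \<bullet> y" using nx nx4 by auto
    qed
  qed
  have l1pos: "l1 > 0"
  proof (rule ccontr)
    assume "\<not> l1 > 0"
    then have l10: "l1 = 0" using assms(2) by simp
    define m where "m = sgn D *s cross3 x2 x3"
    have m1: "dot3 m x1 = \<bar>D\<bar>"
      by (simp add: m_def D_def c_def dot3_cross_simps abs_sgn)
    have m2: "dot3 m x2 = 0" "dot3 m x3 = 0" by (simp_all add: m_def dot3_cross_simps)
    have "l4 * dot3 m x4 = 0" using rel_dot[of m] m1 m2 l10 by simp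
    then have m4: "dot3 m x4 = 0" using l4pos by simp
    have "m \<noteq> 0" using m1 Dnz by (auto simp: dot3_def)
    then show False using halfZ[of m] m1 m2 m4 by simp
  qed
  have c4: "dot3 c x4 \<noteq> 0"
  proof
    assume "dot3 c x4 = 0"
    then have "l3 * D = 0" using rel_dot[of c] by (simp add: c_def D_def dot3_cross_simps)
    then show False using Dnz l1pos assms(3,4) by simp
  qed
  have gc: "gcd (c$1) (gcd (c$2) (c$3)) = 1"
    using gcd_c[OF lat h0] Dnz c4 unfolding c_def D_def by blast
  obtain u v where uv: "u * c$2 + v * c$3 = gcd (c$2) (c$3)" using bezout_int by blast
  obtain s t where st: "s * c$1 + t * gcd (c$2) (c$3) = 1" using bezout_int gc by metis
  define w where "w = (vector [s, t * u, t * v] :: int^3)"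
  have cw: "dot3 c w = 1"
  proof -
    have "dot3 c w = s * c$1 + t * (u * c$2 + v * c$3)" by (simp add: w_def dot3_def algebra_simps)
    then show ?thesis using uv st by simp
  qed
  define \<sigma> where "\<sigma> = sgn D"
  have ss: "\<sigma> * \<sigma> = 1" using Dnz by (simp add: \<sigma>_def sgn_if)
  have sD: "\<sigma> * D = \<bar>D\<bar>" by (simp add: \<sigma>_def abs_sgn)
  define R1 where "R1 = cross3 x2 w"
  define R2 where "R2 = cross3 w x1"
  have dR: "dot3 R1 x1 = 1" "dot3 R1 x2 = 0" "dot3 R1 w = 0"
           "dot3 R2 x1 = 0" "dot3 R2 x2 = 1" "dot3 R2 w = 0"
           "dot3 c x1 = 0" "dot3 c x2 = 0"
    using cw by (simp_all add: R1_def R2_def c_def dot3_cross_simps)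
  define P where "P = dot3 R1 x3"
  define Q where "Q = dot3 R2 x3"
  define S where "S = dot3 R1 x4"
  define T where "T = dot3 R2 x4"
  define U where "U = \<sigma> * dot3 c x4"
  have rP: "l1 + l3 * P + l4 * S = 0" using rel_dot[of R1] dR by (simp add: P_def S_def)
  have rQ: "l2 + l3 * Q + l4 * T = 0" using rel_dot[of R2] dR by (simp add: Q_def T_def)
  have rU: "l3 * \<bar>D\<bar> + l4 * U = 0"
  proof -
    have "l3 * D + l4 * dot3 c x4 = 0" using rel_dot[of c] dR by (simp add: D_def)
    then have "\<sigma> * (l3 * D + l4 * dot3 c x4) = 0" by simp
    then show ?thesis unfolding U_def sD[symmetric] by (simp add: algebra_simps)
  qed
  have cop: "coprime l3 l4"
  proof -
    have "gcd l3 l4 dvd l1"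
    proof -
      have "l1 = - (l3 * P + l4 * S)" using rP by simp
      then show ?thesis by simp
    qed
    moreover have "gcd l3 l4 dvd l2"
    proof -
      have "l2 = - (l3 * Q + l4 * T)" using rQ by simp
      then show ?thesis by simp
    qed
    ultimately have "gcd l3 l4 dvd gcd l1 (gcd l2 (gcd l3 l4))" by simp
    then have "is_unit (gcd l3 l4)" using assms(6) by simp
    then show ?thesis by (simp add: coprime_iff_gcd_eq_1 is_unit_gcd)
  qed
  have "l4 dvd \<bar>D\<bar> * l3"
  proof -
    have "\<bar>D\<bar> * l3 = l4 * (- U)" using rU by (simp add: algebra_simps)
    then show ?thesis by simp
  qed
  then have "l4 dvd \<bar>D\<bar>" using cop by (simp add: coprime_dvd_mult_left_iff coprime_commute)
  then obtain k0 where k0: "\<bar>D\<bar> = l4 * k0" by (elim dvdE)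
  have k0pos: "k0 > 0"
  proof -
    have "l4 * k0 > 0" using k0 Dnz by simp
    then show ?thesis using l4pos by (simp add: zero_less_mult_iff)
  qed
  have Ueq: "U = - (k0 * l3)"
  proof -
    have "l4 * U = l4 * (- (k0 * l3))" using rU k0 by (simp add: algebra_simps)
    then show ?thesis using l4pos mult_cancel_left[of l4 U "- (k0 * l3)"] by linarith
  qed
  obtain a0 b0 where ab0: "a0 * l3 + b0 * l4 = 1" using bezout_int cop
    by (metis coprime_iff_gcd_eq_1)
  define a where "a = a0 + (\<bar>a0\<bar> + 1) * l4"
  define b where "b = b0 - (\<bar>a0\<bar> + 1) * l3"
  have apos: "a > 0"
  proof -
    have "(\<bar>a0\<bar> + 1) * 1 \<le> (\<bar>a0\<bar> + 1) * l4" using l4pos by (intro mult_left_mono) auto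
    moreover have "- a0 \<le> \<bar>a0\<bar>" by simp
    ultimately show ?thesis unfolding a_def by (smt (verit))
  qed
  have ab: "a * l3 + b * l4 = 1" using ab0 by (simp add: a_def b_def algebra_simps)
  define K where "K = l4 * k0"
  have Kpos: "K > 0" using l4pos k0pos by (simp add: K_def)
  define \<alpha> where "\<alpha> = - (P div K)"
  define \<beta> where "\<beta> = - (Q div K)"
  define P' where "P' = P + \<alpha> * K"
  define Q' where "Q' = Q + \<beta> * K"
  have P'm: "P' = P mod K" unfolding P'_def \<alpha>_def by (simp add: minus_div_mult_eq_mod[symmetric] algebra_simps)
  have Q'm: "Q' = Q mod K" unfolding Q'_def \<beta>_def by (simp add: minus_div_mult_eq_mod[symmetric] algebra_simps)
  have P'b: "0 \<le> P'" "P' < K" using Kpos by (simp_all add: P'm)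
  have Q'b: "0 \<le> Q'" "Q' < K" using Kpos by (simp_all add: Q'm)
  define j1 where "j1 = P * b - a * S + \<alpha> * k0"
  define j2 where "j2 = Q * b - a * T + \<beta> * k0"
  have l1e: "l1 = - (l3 * P + l4 * S)" using rP by simp
  have l2e: "l2 = - (l3 * Q + l4 * T)" using rQ by simp
  have P'e: "P' = j1 * l4 - a * l1"
  proof -
    have "j1 * l4 - a * l1 = P * (a * l3 + b * l4) + \<alpha> * K"
      unfolding j1_def l1e K_def by (simp add: algebra_simps)
    then show ?thesis using ab by (simp add: P'_def)
  qed
  have Q'e: "Q' = j2 * l4 - a * l2"
  proof -
    have "j2 * l4 - a * l2 = Q * (a * l3 + b * l4) + \<beta> * K"
      unfolding j2_def l2e K_def by (simp add: algebra_simps)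
    then show ?thesis using ab by (simp add: Q'_def)
  qed
  have j1nn: "j1 \<ge> 0"
  proof -
    have "j1 * l4 \<ge> 0" using P'e P'b apos assms(2) by (smt (verit) mult_nonneg_nonneg)
    then show ?thesis using l4pos by (simp add: zero_le_mult_iff)
  qed
  have j2nn: "j2 \<ge> 0"
  proof -
    have "j2 * l4 \<ge> 0" using Q'e Q'b apos assms(2,3) by (smt (verit) mult_nonneg_nonneg)
    then show ?thesis using l4pos by (simp add: zero_le_mult_iff)
  qed
  define S' where "S' = S + \<alpha> * U"
  define T' where "T' = T + \<beta> * U"
  have rP': "l1 + l3 * P' + l4 * S' = 0"
    using rP unfolding P'_def S'_def Ueq K_def by (simp add: algebra_simps)
  have rQ': "l2 + l3 * Q' + l4 * T' = 0"
    using rQ unfolding Q'_def T'_def Ueq K_def by (simp add: algebra_simps)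
  have S'e: "S' = - j1 * l3 - b * l1"
  proof -
    have "l4 * S' = l4 * (- j1 * l3 - b * l1)"
    proof -
      have "l4 * S' = - l1 - l3 * P'" using rP' by simp
      also have "\<dots> = - l1 * (a * l3 + b * l4) - l3 * (j1 * l4 - a * l1)" using ab P'e by simp
      also have "\<dots> = l4 * (- j1 * l3 - b * l1)" by (simp add: algebra_simps)
      finally show ?thesis .
    qed
    then show ?thesis using l4pos mult_cancel_left[of l4 S' "- j1 * l3 - b * l1"] by linarith
  qed
  have T'e: "T' = - j2 * l3 - b * l2"
  proof -
    have "l4 * T' = l4 * (- j2 * l3 - b * l2)"
    proof -
      have "l4 * T' = - l2 - l3 * Q'" using rQ' by simp
      also have "\<dots> = - l2 * (a * l3 + b * l4) - l3 * (j2 * l4 - a * l2)" using ab Q'e by simp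
      also have "\<dots> = l4 * (- j2 * l3 - b * l2)" by (simp add: algebra_simps)
      finally show ?thesis .
    qed
    then show ?thesis using l4pos mult_cancel_left[of l4 T' "- j2 * l3 - b * l2"] by linarith
  qed
  define g :: "int^3^3" where "g = vector [R1 + (\<alpha> * \<sigma>) *s c, R2 + (\<beta> * \<sigma>) *s c, \<sigma> *s c]"
  have g123: "g$1 = R1 + (\<alpha> * \<sigma>) *s c" "g$2 = R2 + (\<beta> * \<sigma>) *s c" "g$3 = \<sigma> *s c"
    by (simp_all add: g_def)
  have gx1: "g *v x1 = vector [1, 0, 0]"
    by (simp add: vec3_eq mv3 g123 dR)
  have gx2: "g *v x2 = vector [0, 1, 0]"
    by (simp add: vec3_eq mv3 g123 dR)
  have gx3: "g *v x3 = vector [P', Q', K]"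
    using sD k0 by (simp add: vec3_eq mv3 g123 P'_def Q'_def P_def Q_def K_def D_def algebra_simps)
  have gx4: "g *v x4 = vector [S', T', U]"
    by (simp add: vec3_eq mv3 g123 S'_def T'_def S_def T_def U_def algebra_simps)
  define vv where "vv = \<sigma> *s w - \<alpha> *s x1 - \<beta> *s x2"
  define h :: "int^3^3" where "h = transpose (vector [x1, x2, vv])"
  have gh: "g ** h = mat 1"
  proof -
    have "dot3 (g$i) (vector [x1, x2, vv] $ j) = (if i = j then 1 else 0)" for i j
      using exhaust_3[of i] exhaust_3[of j] ss cw
      by (auto simp: g123 dR vv_def algebra_simps)
    then show ?thesis by (simp add: vec_eq_iff h_def mm_t mat1_3)
  qed
  have hg: "h ** g = mat 1"
  proof -
    have "x1$i * g$1$j + x2$i * g$2$j + vv$i * g$3$j = (if i = j then 1 else 0)" for i j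
    proof -
      have "x1$i * g$1$j + x2$i * g$2$j + vv$i * g$3$j =
          x1$i * (cross3 x2 w)$j + x2$i * (cross3 w x1)$j + (\<sigma> * \<sigma>) * (w$i * (cross3 x1 x2)$j)"
        by (simp add: g123 vv_def R1_def R2_def c_def algebra_simps)
      also have "\<dots> = (if i = j then 1 else 0)"
        using adj_id[of x1 i x2 w j] ss cw by (simp add: c_def)
      finally show ?thesis .
    qed
    then show ?thesis
      using exhaust_3 by (simp add: vec_eq_iff h_def t_mm mat1_3)
  qed
  have inv: "invertible g" unfolding invertible_def using gh hg by blast
  have last: "(P' = 0 \<or> Q' = 0) \<longrightarrow> l4 = 1"
  proof
    assume "P' = 0 \<or> Q' = 0"
    then have "l1 = l4"
    proof
      assume "P' = 0"
      then have "l4 dvd l1" using rP' by (metis add.right_neutral dvd_triv_left mult_zero_right dvd_minus_iff add_eq_0_iff)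
      then show "l1 = l4" using zdvd_imp_le[of l4 l1] l1pos assms(3-5) by linarith
    next
      assume Q0: "Q' = 0"
      then have "l4 dvd l2" using rQ' by (metis add.right_neutral dvd_triv_left mult_zero_right dvd_minus_iff add_eq_0_iff)
      then have "l2 = l4" using zdvd_imp_le[of l4 l2] l1pos assms(3-5) by linarith
      then have "l3 = l4" using assms(4,5) by simp
      then have "l1 = - (l4 * (P' + S'))" using rP' by (simp add: algebra_simps)
      then have "l4 dvd l1" by simp
      then show "l1 = l4" using zdvd_imp_le[of l4 l1] l1pos assms(3-5) by linarith
    qed
    then have "l2 = l4" "l3 = l4" using assms(3-5) by simp_all
    then show "l4 = 1" using assms(6) \<open>l1 = l4\<close> l4pos by simp
  qed
  show ?thesis
  proof (intro exI conjI)
    show "invertible g" by (rule inv)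
    show "a > 0" by (rule apos)
    show "a * l3 + b * l4 = 1" by (rule ab)
    show "0 \<le> int (nat j1) * l4 - a * l1" using P'e P'b j1nn by simp
    show "int (nat j1) * l4 - a * l1 < int (nat k0) * l4" using P'e P'b j1nn k0pos by (simp add: K_def mult.commute)
    show "0 \<le> int (nat j2) * l4 - a * l2" using Q'e Q'b j2nn by simp
    show "int (nat j2) * l4 - a * l2 < int (nat k0) * l4" using Q'e Q'b j2nn k0pos by (simp add: K_def mult.commute)
    show "g *v x1 = vector [1, 0, 0]" by (rule gx1)
    show "g *v x2 = vector [0, 1, 0]" by (rule gx2)
    show "g *v x3 = vector [int (nat j1) * l4 - a * l1, int (nat j2) * l4 - a * l2, int (nat k0) * l4]"
      using gx3 P'e Q'e j1nn j2nn k0pos by (simp add: K_def mult.commute)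
    show "g *v x4 = vector [- int (nat j1) * l3 - b * l1, - int (nat j2) * l3 - b * l2, - int (nat k0) * l3]"
      using gx4 S'e T'e Ueq j1nn j2nn k0pos by simp
    show "(int (nat j1) * l4 - a * l1 = 0 \<or> int (nat j2) * l4 - a * l2 = 0) \<longrightarrow> l4 = 1"
      using last P'e Q'e j1nn j2nn by simp
  qed
qed

end
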